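(* Let $\widetilde{E(2)}$ be as in the context, let $K\in(-1,1)$, $K\neq0$, let $b$ solve $b'(v)=\sqrt{\lambda_1^2-K(\lambda_1^2\cos^2 b(v)+\lambda_2^2\sin^2 b(v))}$, $b(0)=0$, let $W>0$ be the unique positive number with $b(W)=\pi$, let $x_3$ solve $x_3'(v)=\frac{\lambda_1\lambda_2K}{\lambda_1+b'(v)}$, $x_3(0)=0$, and let $X:\mathbb{C}\to\widetilde{E(2)}$ be $$X(u+iv)=\Big(\tfrac{1}{\lambda_1^2\lambda_2}\big(\tfrac{1}{\lambda_1}\cos x_3(v)\sin b(v)+\tfrac{1}{\lambda_2}\sin x_3(v)\cos b(v)\big)x_3'(v)\sinh(-\lambda_1u),\ \tfrac{1}{\lambda_1^2\lambda_2}\big(\tfrac{1}{\lambda_1}\sin x_3(v)\sin b(v)-\tfrac{1}{\lambda_2}\cos x_3(v)\cos b(v)\big)x_3'(v)\sinh(-\lambda_1u),\ x_3(v)\Big).$$ Then: (1) the $x_3$-axis $\{(0,0,t):t\in\mathbb{R}\}$ is contained in $X(\mathbb{C})$; (2) for every constant $C\in\mathbb{R}$, the intersection of $X(\mathbb{C})$ with the plane $\{x_3=C\}$ is a straight line (in the coordinates $(x_1,x_2,x_3)$); (3) $X(\mathbb{C})$ is invariant under left multiplication by $(0,0,2x_3(W))$; more precisely $(0,0,2x_3(W))*X(u+iv)=X(u+i(v+2W))$ for all $u,v\in\mathbb{R}$.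
   Context: $\widetilde{E(2)}$ is $\mathbb{R}^3$ with coordinates $(x_1,x_2,x_3)$ and group law $(a_1,b_1,c_1)*(a_2,b_2,c_2)=(a_1+a_2\cos c_1-b_2\sin c_1,\ b_1+a_2\sin c_1+b_2\cos c_1,\ c_1+c_2)$, with the left-invariant metric $\lambda_1^2(\cos x_3\,dx_1+\sin x_3\,dx_2)^2+\lambda_2^2(-\sin x_3\,dx_1+\cos x_3\,dx_2)^2+\frac{1}{\lambda_1^2\lambda_2^2}dx_3^2$, where either $\lambda_1>\lambda_2>0$ or $\lambda_1=\lambda_2=1$. (The solution $b$ is defined on all of $\mathbb{R}$ and is an increasing bijection of $\mathbb{R}$, so $W$ exists and is unique.) *)

theory Defs
  imports "HOL-Analysis.Analysis"
begin

text \<open>Points of the universal cover of E(2): triples (x1,x2,x3) in real x real x real.\<close>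

definition e2mult :: "real \<times> real \<times> real \<Rightarrow> real \<times> real \<times> real \<Rightarrow> real \<times> real \<times> real" where
  "e2mult p q = (case p of (a1, b1, c1) \<Rightarrow> case q of (a2, b2, c2) \<Rightarrow>
     (a1 + a2 * cos c1 - b2 * sin c1, b1 + a2 * sin c1 + b2 * cos c1, c1 + c2))"

definition bODE :: "real \<Rightarrow> real \<Rightarrow> real \<Rightarrow> real \<Rightarrow> real" where
  "bODE l1 l2 K y = sqrt (l1^2 - K * (l1^2 * (cos y)^2 + l2^2 * (sin y)^2))"

definition x3ODE :: "real \<Rightarrow> real \<Rightarrow> real \<Rightarrow> (real \<Rightarrow> real) \<Rightarrow> real \<Rightarrow> real" where
  "x3ODE l1 l2 K b v = l1 * l2 * K / (l1 + bODE l1 l2 K (b v))"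

definition Xmap :: "real \<Rightarrow> real \<Rightarrow> real \<Rightarrow> (real \<Rightarrow> real) \<Rightarrow> (real \<Rightarrow> real) \<Rightarrow> complex \<Rightarrow> real \<times> real \<times> real" where
  "Xmap l1 l2 K b x3 z = (let u = Re z; v = Im z; x3' = x3ODE l1 l2 K b v in
     ( 1 / (l1^2 * l2) * (1 / l1 * cos (x3 v) * sin (b v) + 1 / l2 * sin (x3 v) * cos (b v)) * x3' * sinh (- l1 * u),
       1 / (l1^2 * l2) * (1 / l1 * sin (x3 v) * sin (b v) - 1 / l2 * cos (x3 v) * cos (b v)) * x3' * sinh (- l1 * u),
       x3 v))"

end

theory Submission
  imports Defs
begin

lemma auto_unique:
  fixes F b g :: "real \<Rightarrow> real"
  assumes contF: "continuous_on UNIV F" and pos: "\<And>y. F y > 0"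
    and db: "\<And>v. (b has_real_derivative F (b v)) (at v)"
    and dg: "\<And>v. (g has_real_derivative F (g v)) (at v)"
    and e0: "b 0 = g 0"
  shows "b v = g v"
proof (cases "v = 0")
  case True then show ?thesis using e0 by simp
next
  case False
  define lo where "lo = min 0 v"
  define hi where "hi = max 0 v"
  have lohi: "lo < hi" using False by (auto simp: lo_def hi_def)
  define R where "R = \<bar>b v\<bar> + \<bar>g v\<bar> + \<bar>b 0\<bar> + 1"
  define h where "h = (\<lambda>y. 1 / F y)"
  have conth: "continuous_on {-R..R} h"
    unfolding h_def
    by (intro continuous_intros continuous_on_subset[OF contF]) (auto simp: pos less_imp_neq[OF pos, symmetric])
  define H where "H = (\<lambda>y. integral {-R..y} h)"
  have dH: "(H has_real_derivative h y) (at y)" if "-R < y" "y < R" for y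
  proof -
    have "(H has_real_derivative h y) (at y within {-R..R})"
      unfolding H_def using integral_has_real_derivative[OF conth] that by auto
    then have "(H has_real_derivative h y) (at y within {-R<..<R})"
      by (rule has_field_derivative_subset) auto
    then show ?thesis using at_within_open[of y "{-R<..<R}"] that by auto
  qed
  have monob: "b s \<le> b t" if "s \<le> t" for s t
  proof (cases "s = t")
    case False then have "s < t" using that by simp
    then show ?thesis using DERIV_pos_imp_increasing[of s t b] db pos by fastforce
  qed simp
  have monog: "g s \<le> g t" if "s \<le> t" for s t
  proof (cases "s = t")
    case False then have "s < t" using that by simp
    then show ?thesis using DERIV_pos_imp_increasing[of s t g] dg pos by fastforce
  qed simp
  have bndb: "-R < b t \<and> b t < R" if "lo \<le> t" "t \<le> hi" for t
  proof -
    have "b lo \<le> b t" "b t \<le> b hi" using monob that by auto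
    moreover have "b lo = b 0 \<or> b lo = b v" "b hi = b 0 \<or> b hi = b v"
      unfolding lo_def hi_def by (auto simp: min_def max_def)
    ultimately show ?thesis unfolding R_def by auto
  qed
  have bndg: "-R < g t \<and> g t < R" if "lo \<le> t" "t \<le> hi" for t
  proof -
    have "g lo \<le> g t" "g t \<le> g hi" using monog that by auto
    moreover have "g lo = g 0 \<or> g lo = g v" "g hi = g 0 \<or> g hi = g v"
      unfolding lo_def hi_def by (auto simp: min_def max_def)
    ultimately show ?thesis unfolding R_def using e0 by auto
  qed
  define phi where "phi = (\<lambda>t. H (b t) - H (g t))"
  have dphi: "(phi has_real_derivative 0) (at t)" if "lo \<le> t" "t \<le> hi" for t
  proof -
    have "(phi has_real_derivative (h (b t) * F (b t) - h (g t) * F (g t))) (at t)"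
      unfolding phi_def
      by (intro derivative_intros DERIV_chain2[OF dH] db dg) (use bndb[OF that] bndg[OF that] in auto)
    moreover have "h (b t) * F (b t) - h (g t) * F (g t) = 0"
      unfolding h_def using pos[of "b t"] pos[of "g t"] by simp
    ultimately show ?thesis by simp
  qed
  have c1: "continuous_on {lo..hi} phi"
  proof (intro continuous_at_imp_continuous_on ballI)
    fix x assume "x \<in> {lo..hi}"
    then show "isCont phi x" using dphi[of x] DERIV_isCont by auto
  qed
  have c2: "\<And>x. lo < x \<Longrightarrow> x < hi \<Longrightarrow> DERIV phi x :> 0"
    using dphi by auto
  have "phi 0 = phi lo"
    by (rule DERIV_isconst2[OF lohi c1 c2]) (simp_all add: lo_def hi_def)
  moreover have "phi v = phi lo"
    by (rule DERIV_isconst2[OF lohi c1 c2]) (simp_all add: lo_def hi_def)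
  ultimately have "phi v = phi 0" by simp
  then have eqH: "H (b v) = H (g v)" unfolding phi_def using e0 by simp
  have vin: "lo \<le> v" "v \<le> hi" by (auto simp: lo_def hi_def)
  have hpos: "h y > 0" for y unfolding h_def using pos by simp
  have Hmono: "H x < H y" if "x < y" "-R < x" "y < R" for x y
  proof (rule DERIV_pos_imp_increasing[OF that(1)])
    fix t assume "x \<le> t" "t \<le> y"
    then have "-R < t" "t < R" using that by linarith+
    then show "\<exists>d. (H has_real_derivative d) (at t) \<and> 0 < d"
      using dH hpos by blast
  qed
  show ?thesis
  proof (rule ccontr)
    assume "b v \<noteq> g v"
    then consider "b v < g v" | "g v < b v" by linarith
    then show False
    proof cases
      case 1
      show False using Hmono[OF 1] bndb[OF vin] bndg[OF vin] eqH by simp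
    next
      case 2
      show False using Hmono[OF 2] bndb[OF vin] bndg[OF vin] eqH by simp
    qed
  qed
qed


lemma pos_arg:
  fixes l1 K A :: real
  assumes "l1 > 0" "0 \<le> A" "A \<le> l1^2" "-1 < K" "K < 1"
  shows "l1^2 - K * A > 0"
proof -
  have "K * A \<le> \<bar>K\<bar> * A" using assms by (simp add: mult_right_mono)
  also have "\<dots> \<le> \<bar>K\<bar> * l1^2" using assms by (simp add: mult_left_mono)
  also have "\<dots> < l1^2" using assms by simp
  finally show ?thesis by simp
qed

lemma bODE_pos:
  assumes "l1 > 0" "l2 > 0" "l2 \<le> l1" "-1 < K" "K < 1"
  shows "bODE l1 l2 K y > 0"
proof -
  have "l2^2 \<le> l1^2" using assms by (simp add: power_mono)
  then have "l1^2 * (cos y)^2 + l2^2 * (sin y)^2 \<le> l1^2 * (cos y)^2 + l1^2 * (sin y)^2"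
    by (simp add: mult_right_mono)
  also have "\<dots> = l1^2" by (simp add: distrib_left[symmetric])
  finally have "l1^2 - K * (l1^2 * (cos y)^2 + l2^2 * (sin y)^2) > 0"
    by (intro pos_arg) (use assms in auto)
  then show ?thesis unfolding bODE_def by simp
qed

lemma bODE_per: "bODE l1 l2 K (y + pi) = bODE l1 l2 K y"
  unfolding bODE_def by simp

lemma bODE_cont: "continuous_on UNIV (bODE l1 l2 K)"
  unfolding bODE_def by (intro continuous_intros)

lemma rot1:
  fixes c k a x sb e cb d s :: real
  shows "cos c * (k * (a * cos x * sb + e * sin x * cb) * d * s) -
    sin c * (k * (a * sin x * sb - e * cos x * cb) * d * s) =
    k * (a * cos (x + c) * sb + e * sin (x + c) * cb) * d * s"
  unfolding cos_add sin_add by (simp add: algebra_simps)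

lemma rot2:
  fixes c k a x sb e cb d s :: real
  shows "sin c * (k * (a * cos x * sb + e * sin x * cb) * d * s) +
    cos c * (k * (a * sin x * sb - e * cos x * cb) * d * s) =
    k * (a * sin (x + c) * sb - e * cos (x + c) * cb) * d * s"
  unfolding cos_add sin_add by (simp add: algebra_simps)

lemma nonzero_rot:
  fixes a e :: real
  assumes "a \<noteq> 0" "e \<noteq> 0"
  shows "(a * cos x * sin bb + e * sin x * cos bb) \<noteq> 0 \<or> (a * sin x * sin bb - e * cos x * cos bb) \<noteq> 0"
proof (rule ccontr)
  assume "\<not> ?thesis"
  then have P: "a * cos x * sin bb + e * sin x * cos bb = 0" and Q: "a * sin x * sin bb - e * cos x * cos bb = 0" by auto
  have "cos x * (a * cos x * sin bb + e * sin x * cos bb) + sin x * (a * sin x * sin bb - e * cos x * cos bb) = a * sin bb * ((sin x)^2 + (cos x)^2)"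
    by algebra
  then have "a * sin bb = 0" using P Q by simp
  then have s: "sin bb = 0" using assms by simp
  have "sin x * (a * cos x * sin bb + e * sin x * cos bb) - cos x * (a * sin x * sin bb - e * cos x * cos bb) = e * cos bb * ((sin x)^2 + (cos x)^2)"
    by algebra
  then have "e * cos bb = 0" using P Q by simp
  then have "cos bb = 0" using assms by simp
  then show False using s sin_cos_squared_add[of bb] by simp
qed

theorem theorem4p2:
  fixes l1 l2 K W :: real and b x3 :: "real \<Rightarrow> real"
  assumes lam: "(l1 > l2 \<and> l2 > 0) \<or> (l1 = 1 \<and> l2 = 1)"
    and K: "-1 < K" "K < 1" "K \<noteq> 0"
    and b_ode: "\<And>v. (b has_real_derivative bODE l1 l2 K (b v)) (at v)"
    and b0: "b 0 = 0"
    and W: "W > 0" "b W = pi"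
    and x3_ode: "\<And>v. (x3 has_real_derivative x3ODE l1 l2 K b v) (at v)"
    and x30: "x3 0 = 0"
  shows "(\<forall>t. (0, 0, t) \<in> range (Xmap l1 l2 K b x3))
     \<and> (\<forall>C. \<exists>p d :: real \<times> real \<times> real. d \<noteq> 0 \<and>
           {q \<in> range (Xmap l1 l2 K b x3). snd (snd q) = C} = {p + s *\<^sub>R d | s. True})
     \<and> (\<forall>u v. e2mult (0, 0, 2 * x3 W) (Xmap l1 l2 K b x3 (Complex u v))
              = Xmap l1 l2 K b x3 (Complex u (v + 2 * W)))"
proof -
  have l1: "l1 > 0" and l2: "l2 > 0" and l12: "l2 \<le> l1" using lam by auto
  define F where "F = bODE l1 l2 K"
  have Fpos: "F y > 0" for y unfolding F_def using bODE_pos[OF l1 l2 l12 K(1,2)] .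
  have bper: "b (v + W) = b v + pi" for v
  proof -
    have "b v = (\<lambda>v. b (v + W) - pi) v"
    proof (rule auto_unique[where F=F and b=b and g="\<lambda>v. b (v + W) - pi" and v=v])
      show "continuous_on UNIV F" unfolding F_def by (rule bODE_cont)
      show "F y > 0" for y by (rule Fpos)
      show "(b has_real_derivative F (b v)) (at v)" for v unfolding F_def by (rule b_ode)
      show "((\<lambda>v. b (v + W) - pi) has_real_derivative F (b (v + W) - pi)) (at v)" for v
      proof -
        have "((\<lambda>v. b (v + W) - pi) has_real_derivative F (b (v + W)) * 1 - 0) (at v)"
          unfolding F_def by (intro derivative_intros DERIV_chain2[OF b_ode]) (auto intro!: derivative_eq_intros)
        moreover have "F (b (v + W)) = F (b (v + W) - pi)"
          unfolding F_def using bODE_per[of l1 l2 K "b (v + W) - pi"] by simp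
        ultimately show ?thesis by simp
      qed
      show "b 0 = b (0 + W) - pi" using b0 W by simp
    qed
    then show ?thesis by simp
  qed
  have x3'per: "x3ODE l1 l2 K b (v + W) = x3ODE l1 l2 K b v" for v
    unfolding x3ODE_def bper bODE_per ..
  define c where "c = x3 W"
  have x3per: "x3 (v + W) = x3 v + c" for v
  proof -
    have "\<forall>v. ((\<lambda>v. x3 (v + W) - x3 v) has_real_derivative 0) (at v)"
    proof
      fix v
      have "((\<lambda>v. x3 (v + W) - x3 v) has_real_derivative x3ODE l1 l2 K b (v + W) * 1 - x3ODE l1 l2 K b v) (at v)"
        by (intro derivative_intros DERIV_chain2[OF x3_ode] x3_ode) (auto intro!: derivative_eq_intros)
      then show "((\<lambda>v. x3 (v + W) - x3 v) has_real_derivative 0) (at v)" using x3'per by simp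
    qed
    from DERIV_isconst_all[OF this, of v 0] show ?thesis using x30 c_def by simp
  qed
  have x3'nz: "x3ODE l1 l2 K b v \<noteq> 0" for v
  proof -
    have "l1 + bODE l1 l2 K (b v) > 0" using Fpos[of "b v"] l1 F_def by simp
    then show ?thesis unfolding x3ODE_def using l1 l2 K(3) by simp
  qed
  have x3cont: "continuous_on UNIV x3"
    by (intro continuous_at_imp_continuous_on ballI) (use x3_ode DERIV_isCont in blast)
  have x3inj: "x = y" if "x3 x = x3 y" for x y
  proof (rule ccontr)
    assume ne: "x \<noteq> y"
    have *: False if "s < t" "x3 s = x3 t" for s t
    proof -
      have "\<exists>z. s < z \<and> z < t \<and> DERIV x3 z :> 0"
      proof (rule Rolle[OF that])
        show "continuous_on {s..t} x3"
          by (rule continuous_on_subset[OF x3cont]) auto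
        show "x3 differentiable (at z)" for z using x3_ode real_differentiable_def by blast
      qed
      then obtain z where "DERIV x3 z :> 0" by blast
      then show False using DERIV_unique[OF x3_ode[of z]] x3'nz by blast
    qed
    show False using ne that *[of x y] *[of y x] by linarith
  qed
  have cnz: "c \<noteq> 0" using x3inj[of W 0] W x30 c_def by auto
  have x3n: "x3 (v + real n * W) = x3 v + real n * c" for n v
  proof (induction n)
    case (Suc n)
    have "x3 (v + real (Suc n) * W) = x3 ((v + real n * W) + W)" by (simp add: algebra_simps)
    also have "\<dots> = x3 v + real n * c + c" using x3per Suc by simp
    finally show ?case by (simp add: algebra_simps)
  qed simp
  have conn: "connected (range x3)"
    by (rule connected_continuous_image[OF x3cont connected_UNIV])
  have x3surj: "\<exists>v. x3 v = t" for t
  proof -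
    define n where "n = nat (ceiling (\<bar>t\<bar> / \<bar>c\<bar>))"
    have "\<bar>t\<bar> / \<bar>c\<bar> \<le> real n" unfolding n_def by linarith
    then have nt: "\<bar>t\<bar> \<le> real n * \<bar>c\<bar>" using cnz by (simp add: field_simps)
    have p: "x3 (real n * W) = real n * c" using x3n[of 0 n] x30 by simp
    have m: "x3 (- (real n * W)) = - (real n * c)" using x3n[of "- (real n * W)" n] x30 by simp
    have r1: "real n * c \<in> range x3" using p by (metis rangeI)
    have r2: "- (real n * c) \<in> range x3" using m by (metis rangeI)
    have "t \<in> range x3"
    proof (cases "c > 0")
      case True
      then have "\<bar>c\<bar> = c" by simp
      then have "- (real n * c) \<le> t" "t \<le> real n * c" using nt by (simp_all add: abs_le_iff)
      then show ?thesis using connectedD_interval[OF conn r2 r1] by blast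
    next
      case False
      then have "\<bar>c\<bar> = - c" by simp
      then have "real n * c \<le> t" "t \<le> - (real n * c)" using nt by (simp_all add: abs_le_iff)
      then show ?thesis using connectedD_interval[OF conn r1 r2] by blast
    qed
    then show ?thesis by auto
  qed
  have part1: "\<forall>t. (0, 0, t) \<in> range (Xmap l1 l2 K b x3)"
  proof
    fix t
    obtain v where v: "x3 v = t" using x3surj by blast
    have "Xmap l1 l2 K b x3 (Complex 0 v) = (0, 0, t)"
      unfolding Xmap_def Let_def using v by simp
    then show "(0, 0, t) \<in> range (Xmap l1 l2 K b x3)" by (metis rangeI)
  qed
  have part2: "\<forall>C. \<exists>p d :: real \<times> real \<times> real. d \<noteq> 0 \<and>
           {q \<in> range (Xmap l1 l2 K b x3). snd (snd q) = C} = {p + s *\<^sub>R d | s. True}"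
  proof
    fix C
    obtain v0 where v0: "x3 v0 = C" using x3surj by blast
    define k where "k = 1 / (l1^2 * l2)"
    define P where "P = 1 / l1 * cos (x3 v0) * sin (b v0) + 1 / l2 * sin (x3 v0) * cos (b v0)"
    define Q where "Q = 1 / l1 * sin (x3 v0) * sin (b v0) - 1 / l2 * cos (x3 v0) * cos (b v0)"
    define e where "e = x3ODE l1 l2 K b v0"
    define d where "d = (k * P * e, k * Q * e, 0::real)"
    define p where "p = (0::real, 0::real, C)"
    have Xv0: "Xmap l1 l2 K b x3 (Complex u v0) = p + sinh (- l1 * u) *\<^sub>R d" for u
      unfolding Xmap_def Let_def p_def d_def k_def P_def Q_def e_def using v0 by simp
    have "k \<noteq> 0" using l1 l2 k_def by simp
    moreover have "e \<noteq> 0" using x3'nz e_def by simp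
    moreover have "P \<noteq> 0 \<or> Q \<noteq> 0" unfolding P_def Q_def
      by (rule nonzero_rot) (use l1 l2 in auto)
    ultimately have dnz: "d \<noteq> 0" unfolding d_def by (auto simp: zero_prod_def)
    have "{q \<in> range (Xmap l1 l2 K b x3). snd (snd q) = C} = {p + s *\<^sub>R d | s. True}"
    proof (intro set_eqI iffI)
      fix q assume "q \<in> {q \<in> range (Xmap l1 l2 K b x3). snd (snd q) = C}"
      then obtain z where q: "q = Xmap l1 l2 K b x3 z" and C: "snd (snd q) = C" by auto
      have "x3 (Im z) = C" using q C unfolding Xmap_def Let_def by simp
      then have "Im z = v0" using x3inj v0 by auto
      then have "z = Complex (Re z) v0" by (simp add: complex_eq_iff)
      then have "q = p + sinh (- l1 * Re z) *\<^sub>R d" using q Xv0 by metis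
      then show "q \<in> {p + s *\<^sub>R d | s. True}" by blast
    next
      fix q assume "q \<in> {p + s *\<^sub>R d | s. True}"
      then obtain s where q: "q = p + s *\<^sub>R d" by blast
      define u where "u = - arsinh s / l1"
      have "sinh (- l1 * u) = s" unfolding u_def using l1 by simp
      then have "q = Xmap l1 l2 K b x3 (Complex u v0)" using Xv0[of u] q by metis
      moreover have "snd (snd q) = C" using q unfolding p_def d_def by simp
      ultimately show "q \<in> {q \<in> range (Xmap l1 l2 K b x3). snd (snd q) = C}" by auto
    qed
    then show "\<exists>p d :: real \<times> real \<times> real. d \<noteq> 0 \<and>
           {q \<in> range (Xmap l1 l2 K b x3). snd (snd q) = C} = {p + s *\<^sub>R d | s. True}"
      using dnz by blast
  qed
  have part3: "\<forall>u v. e2mult (0, 0, 2 * x3 W) (Xmap l1 l2 K b x3 (Complex u v))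
              = Xmap l1 l2 K b x3 (Complex u (v + 2 * W))"
  proof (intro allI)
    fix u v
    have vv: "v + 2 * W = (v + W) + W" by simp
    have b2: "b (v + 2 * W) = b v + 2 * pi" unfolding vv bper by simp
    have x2: "x3 (v + 2 * W) = x3 v + 2 * c" unfolding vv x3per by simp
    have e2: "x3ODE l1 l2 K b (v + 2 * W) = x3ODE l1 l2 K b v" unfolding vv x3'per ..
    define k where "k = 1 / (l1^2 * l2)"
    define a where "a = 1 / l1"
    define e where "e = 1 / l2"
    define sb where "sb = sin (b v)"
    define cb where "cb = cos (b v)"
    define d where "d = x3ODE l1 l2 K b v"
    define s where "s = sinh (- l1 * u)"
    define x where "x = x3 v"
    have L: "Xmap l1 l2 K b x3 (Complex u v) =
      (k * (a * cos x * sb + e * sin x * cb) * d * s, k * (a * sin x * sb - e * cos x * cb) * d * s, x)"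
      unfolding Xmap_def Let_def k_def a_def e_def sb_def cb_def d_def s_def x_def by simp
    have R: "Xmap l1 l2 K b x3 (Complex u (v + 2 * W)) =
      (k * (a * cos (x + 2 * c) * sb + e * sin (x + 2 * c) * cb) * d * s,
       k * (a * sin (x + 2 * c) * sb - e * cos (x + 2 * c) * cb) * d * s, x + 2 * c)"
      unfolding Xmap_def Let_def k_def a_def e_def sb_def cb_def d_def s_def x_def
      by (simp add: b2 x2 e2)
    show "e2mult (0, 0, 2 * x3 W) (Xmap l1 l2 K b x3 (Complex u v))
              = Xmap l1 l2 K b x3 (Complex u (v + 2 * W))"
      unfolding L R e2mult_def c_def[symmetric]
      using rot1[of "2 * c" k a x sb e cb d s] rot2[of "2 * c" k a x sb e cb d s]
      by (simp add: mult.commute[of _ "cos (2 * c)"] mult.commute[of _ "sin (2 * c)"])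
  qed
  show ?thesis using part1 part2 part3 by blast
qed

end
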